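(* Let $a,b,k,\ell$ be positive integers with $\gcd(a,b)=1$. The number of pairs of integers $(\alpha,\beta)$ with $0\le\alpha<k$, $0\le\beta<\ell$ and $\gcd(k,\ell,a\beta-b\alpha)=1$ equals $$k\ell\,\frac{\varphi(\gcd(k,\ell))}{\gcd(k,\ell)},$$ where $\varphi$ is Euler's totient function. *)

theory Defs
  imports "HOL-Number_Theory.Number_Theory"
begin

end

theory Submission
  imports Defs
begin

lemma periodic_shift:
  fixes f :: "int \<Rightarrow> 'a"
  assumes "\<And>x. f (x + g) = f x"
  shows "f (x + int m * g) = f x"
proof (induction m)
  case 0 then show ?case by simp
next
  case (Suc m)
  have "f (x + int (Suc m) * g) = f ((x + int m * g) + g)" by (simp add: algebra_simps)
  also have "\<dots> = f x" using assms Suc by simp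
  finally show ?case .
qed

lemma sum_periodic:
  fixes f :: "int \<Rightarrow> nat"
  assumes g: "g > 0" and per: "\<And>x. f (x + g) = f x"
  shows "(\<Sum>x\<in>{0..<int m * g}. f x) = m * (\<Sum>x\<in>{0..<g}. f x)"
proof (induction m)
  case 0 then show ?case by simp
next
  case (Suc m)
  have split: "{0..<int (Suc m) * g} = {0..<int m * g} \<union> {int m * g..<int m * g + g}"
    using g by (auto simp: algebra_simps) (smt (verit) mult_nonneg_nonneg of_nat_0_le_iff)+
  have disj: "{0..<int m * g} \<inter> {int m * g..<int m * g + g} = {}" by auto
  have img: "{int m * g..<int m * g + g} = (\<lambda>x. x + int m * g) ` {0..<g}"
  proof -
    have "(\<lambda>x. x + int m * g) ` {0..<g} = {0 + int m * g..<g + int m * g}"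
      by (simp only: image_add_atLeastLessThan')
    then show ?thesis by (simp add: add.commute)
  qed
  have "(\<Sum>x\<in>{int m * g..<int m * g + g}. f x) = (\<Sum>x\<in>{0..<g}. f (x + int m * g))"
    unfolding img by (subst sum.reindex) (auto simp: inj_on_def)
  also have "\<dots> = (\<Sum>x\<in>{0..<g}. f x)" using periodic_shift[of f g, OF per] by simp
  finally have h: "(\<Sum>x\<in>{int m * g..<int m * g + g}. f x) = (\<Sum>x\<in>{0..<g}. f x)" .
  show ?case unfolding split
    by (subst sum.union_disjoint) (use disj h Suc in auto)
qed

lemma card_box:
  fixes P :: "int \<Rightarrow> int \<Rightarrow> bool"
  shows "card {(x::int, y::int). 0 \<le> x \<and> x < m \<and> 0 \<le> y \<and> y < n \<and> P x y}
     = (\<Sum>x\<in>{0..<m}. \<Sum>y\<in>{0..<n}. if P x y then 1 else 0)"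
proof -
  have "{(x::int, y::int). 0 \<le> x \<and> x < m \<and> 0 \<le> y \<and> y < n \<and> P x y}
        = Sigma {0..<m} (\<lambda>x. {y\<in>{0..<n}. P x y})" by auto
  then have "card {(x::int, y::int). 0 \<le> x \<and> x < m \<and> 0 \<le> y \<and> y < n \<and> P x y}
        = (\<Sum>x\<in>{0..<m}. card {y\<in>{0..<n}. P x y})"
    by (simp only:) (rule card_SigmaI, simp, auto intro: finite_subset[of _ "{0..<n}"])
  also have "\<dots> = (\<Sum>x\<in>{0..<m}. \<Sum>y\<in>{0..<n}. if P x y then 1 else 0)"
    by (intro sum.cong refl) (simp add: sum.inter_filter[symmetric])
  finally show ?thesis .
qed


lemma lin_mod: "(c*(x mod g) + e*(y mod g)) mod g = (c*x + e*y) mod (g::int)"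
  by (metis mod_add_eq mod_mult_right_eq)

lemma lin_mod2: "(c*(x mod g) - e*(y mod g)) mod g = (c*x - e*y) mod (g::int)"
  by (metis mod_diff_eq mod_mult_right_eq)

lemma gcd_mod_int: "gcd (g::int) (x mod g) = gcd g x"
  by (metis gcd.commute gcd_red_int)

lemma card_units_int:
  fixes g :: int assumes "g > 0"
  shows "card {t\<in>{0..<g}. gcd g t = 1} = totient (nat g)"
proof (cases "g = 1")
  case True
  then have "{t\<in>{0..<g}. gcd g t = 1} = {0}" by auto
  then show ?thesis using True by simp
next
  case False
  then have g1: "g > 1" using assms by simp
  have gi: "gcd g t = int (gcd (nat t) (nat g))" if "t \<ge> 0" for t
    using that g1 by (simp add: gcd_int_def gcd.commute)
  have "{t\<in>{0..<g}. gcd g t = 1} = int ` totatives (nat g)"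
  proof (intro equalityI subsetI)
    fix t assume t: "t \<in> {t\<in>{0..<g}. gcd g t = 1}"
    then have t0: "t \<ge> 0" "t < g" "gcd g t = 1" by auto
    then have "t \<noteq> 0" using g1 by auto
    moreover have "int (gcd (nat t) (nat g)) = 1" using gi[OF t0(1)] t0(3) by argo
    then have "gcd (nat t) (nat g) = 1" by (simp only: of_nat_eq_1_iff)
    then have "coprime (nat t) (nat g)" by (simp only: coprime_iff_gcd_eq_1)
    ultimately have "nat t \<in> totatives (nat g)" using t0
      unfolding in_totatives_iff by auto
    moreover have "t = int (nat t)" using t0 by simp
    ultimately show "t \<in> int ` totatives (nat g)" by blast
  next
    fix t assume "t \<in> int ` totatives (nat g)"
    then obtain u where u: "u \<in> totatives (nat g)" "t = int u" by auto
    then have u1: "0 < u" "u \<le> nat g" "coprime u (nat g)"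
      unfolding in_totatives_iff by auto
    then have u3: "gcd u (nat g) = 1" by (simp only: coprime_iff_gcd_eq_1)
    have "u \<noteq> nat g" using u1 g1 by auto
    then have "t < g" using u1 u(2) by simp
    moreover have "gcd g t = 1" using gi[of t] u(2) u3 by (simp only: of_nat_0_le_iff of_nat_1 nat_int)
    ultimately show "t \<in> {t\<in>{0..<g}. gcd g t = 1}" using u by simp
  qed
  then show ?thesis by (simp add: card_image totient_def)
qed

theorem mainTheorem17:
  fixes a b k l :: int
  assumes "a > 0" "b > 0" "k > 0" "l > 0" "gcd a b = 1"
  shows "real (card {(\<alpha>::int, \<beta>::int). 0 \<le> \<alpha> \<and> \<alpha> < k \<and> 0 \<le> \<beta> \<and> \<beta> < l \<and>
                  gcd (gcd k l) (a * \<beta> - b * \<alpha>) = 1})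
       = real_of_int (k * l) * real (totient (nat (gcd k l))) / real_of_int (gcd k l)"
proof -
  define g where "g = gcd k l"
  have g0: "g > 0" using assms by (simp add: g_def)
  define P where "P = (\<lambda>\<alpha> \<beta>. gcd g (a * \<beta> - b * \<alpha>) = 1)"
  define h where "h = (\<lambda>\<alpha> \<beta>. if P \<alpha> \<beta> then 1 else (0::nat))"
  have perb: "h x (y + g) = h x y" for x y
  proof -
    have "a * (y + g) - b * x = a * g + (a * y - b * x)" by (simp add: algebra_simps)
    then have "gcd g (a * (y + g) - b * x) = gcd g (a * y - b * x)" by (simp only: gcd_add_mult)
    then show ?thesis by (simp add: h_def P_def)
  qed
  have pera: "h (x + g) y = h x y" for x y
  proof -
    have "a * y - b * (x + g) = (- b) * g + (a * y - b * x)" by (simp add: algebra_simps)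
    then have "gcd g (a * y - b * (x + g)) = gcd g (a * y - b * x)" by (simp only: gcd_add_mult)
    then show ?thesis by (simp add: h_def P_def)
  qed
  define mk where "mk = nat (k div g)"
  define ml where "ml = nat (l div g)"
  have kk: "k = int mk * g" using assms g0 unfolding mk_def g_def
    by (simp add: pos_imp_zdiv_nonneg_iff)
  have ll: "l = int ml * g" using assms g0 unfolding ml_def g_def
    by (simp add: pos_imp_zdiv_nonneg_iff)
  have S: "card {(\<alpha>::int, \<beta>::int). 0 \<le> \<alpha> \<and> \<alpha> < k \<and> 0 \<le> \<beta> \<and> \<beta> < l \<and>
                  gcd (gcd k l) (a * \<beta> - b * \<alpha>) = 1} = (\<Sum>x\<in>{0..<k}. \<Sum>y\<in>{0..<l}. h x y)"
    using card_box[of k l P] by (simp add: h_def P_def g_def)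
  also have "\<dots> = (\<Sum>x\<in>{0..<k}. ml * (\<Sum>y\<in>{0..<g}. h x y))"
    by (intro sum.cong refl) (subst ll, rule sum_periodic[OF g0], rule perb)
  also have "\<dots> = ml * (\<Sum>x\<in>{0..<k}. (\<Sum>y\<in>{0..<g}. h x y))"
    by (simp add: sum_distrib_left)
  also have "(\<Sum>x\<in>{0..<k}. (\<Sum>y\<in>{0..<g}. h x y)) = mk * (\<Sum>x\<in>{0..<g}. (\<Sum>y\<in>{0..<g}. h x y))"
    unfolding kk by (rule sum_periodic[OF g0]) (simp add: pera)
  also have "(\<Sum>x\<in>{0..<g}. (\<Sum>y\<in>{0..<g}. h x y))
      = card {(\<alpha>::int, \<beta>::int). 0 \<le> \<alpha> \<and> \<alpha> < g \<and> 0 \<le> \<beta> \<and> \<beta> < g \<and> P \<alpha> \<beta>}"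
    using card_box[of g g P] by (simp add: h_def)
  also have "card {(\<alpha>::int, \<beta>::int). 0 \<le> \<alpha> \<and> \<alpha> < g \<and> 0 \<le> \<beta> \<and> \<beta> < g \<and> P \<alpha> \<beta>}
      = nat g * totient (nat g)"
  proof -
    obtain u v where uv: "u * a + v * b = 1" using bezout_int[of a b] assms(5) by auto
    define d where "d = u"
    define c where "c = - v"
    have det: "a * d - b * c = 1" using uv by (simp add: d_def c_def algebra_simps)
    define T where "T = {(\<alpha>::int, \<beta>::int). 0 \<le> \<alpha> \<and> \<alpha> < g \<and> 0 \<le> \<beta> \<and> \<beta> < g \<and> P \<alpha> \<beta>}"
    define U where "U = {t\<in>{0..<g}. gcd g t = 1} \<times> {0..<g}"
    define F where "F = (\<lambda>(x::int, y::int). ((a*y - b*x) mod g, (d*x - c*y) mod g))"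
    define G where "G = (\<lambda>(t::int, s::int). ((c*t + a*s) mod g, (d*t + b*s) mod g))"
    have e1: "c * (a*y - b*x) + a * (d*x - c*y) = x" for x y
    proof -
      have "c * (a*y - b*x) + a * (d*x - c*y) = (a*d - b*c) * x" by (simp add: algebra_simps)
      then show ?thesis using det by simp
    qed
    have e2: "d * (a*y - b*x) + b * (d*x - c*y) = y" for x y
    proof -
      have "d * (a*y - b*x) + b * (d*x - c*y) = (a*d - b*c) * y" by (simp add: algebra_simps)
      then show ?thesis using det by simp
    qed
    have e3: "a * (d*t + b*s) - b * (c*t + a*s) = t" for t s
    proof -
      have "a * (d*t + b*s) - b * (c*t + a*s) = (a*d - b*c) * t" by (simp add: algebra_simps)
      then show ?thesis using det by simp
    qed
    have e4: "d * (c*t + a*s) - c * (d*t + b*s) = s" for t s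
    proof -
      have "d * (c*t + a*s) - c * (d*t + b*s) = (a*d - b*c) * s" by (simp add: algebra_simps)
      then show ?thesis using det by simp
    qed
    have "bij_betw F T U"
    proof (rule bij_betw_byWitness[where f'=G])
      show "\<forall>p\<in>T. G (F p) = p"
      proof
        fix p assume "p \<in> T"
        then obtain x y where p: "p = (x, y)" "0 \<le> x" "x < g" "0 \<le> y" "y < g" by (auto simp: T_def)
        have "(c*((a*y - b*x) mod g) + a*((d*x - c*y) mod g)) mod g = x"
          using lin_mod e1 p by simp
        moreover have "(d*((a*y - b*x) mod g) + b*((d*x - c*y) mod g)) mod g = y"
          using lin_mod e2 p by simp
        ultimately show "G (F p) = p" by (simp add: F_def G_def p)
      qed
      show "\<forall>p\<in>U. F (G p) = p"
      proof
        fix p assume "p \<in> U"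
        then obtain t s where p: "p = (t, s)" "0 \<le> t" "t < g" "0 \<le> s" "s < g" by (auto simp: U_def)
        have "(a*((d*t + b*s) mod g) - b*((c*t + a*s) mod g)) mod g = t"
          using lin_mod2 e3 p by simp
        moreover have "(d*((c*t + a*s) mod g) - c*((d*t + b*s) mod g)) mod g = s"
          using lin_mod2 e4 p by simp
        ultimately show "F (G p) = p" by (simp add: F_def G_def p)
      qed
      show "F ` T \<subseteq> U"
      proof
        fix q assume "q \<in> F ` T"
        then obtain x y where xy: "(x, y) \<in> T" "q = F (x, y)" by auto
        then have "gcd g (a*y - b*x) = 1" by (simp add: T_def P_def)
        then show "q \<in> U" using xy g0 by (simp add: U_def F_def gcd_mod_int)
      qed
      show "G ` U \<subseteq> T"
      proof
        fix q assume "q \<in> G ` U"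
        then obtain t s where ts: "(t, s) \<in> U" "q = G (t, s)" by auto
        have "(a*((d*t + b*s) mod g) - b*((c*t + a*s) mod g)) mod g = t"
          using lin_mod2 e3 ts by (simp add: U_def)
        then have "gcd g (a*((d*t + b*s) mod g) - b*((c*t + a*s) mod g)) = gcd g t"
          by (metis gcd_mod_int)
        then show "q \<in> T" using ts g0 by (simp add: T_def U_def G_def P_def)
      qed
    qed
    then have "card T = card U" by (rule bij_betw_same_card)
    also have "card U = totient (nat g) * nat g"
      unfolding U_def card_cartesian_product card_units_int[OF g0] using g0 by simp
    finally show ?thesis by (simp add: T_def)
  qed
  finally have C: "card {(\<alpha>::int, \<beta>::int). 0 \<le> \<alpha> \<and> \<alpha> < k \<and> 0 \<le> \<beta> \<and> \<beta> < l \<and>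
                  gcd (gcd k l) (a * \<beta> - b * \<alpha>) = 1} = ml * (mk * (nat g * totient (nat g)))" .
  have "real_of_int (k * l) * real (totient (nat (gcd k l))) / real_of_int (gcd k l)
      = real ml * (real mk * (real (nat g) * real (totient (nat g))))"
    using g0 unfolding g_def[symmetric] by (subst kk, subst ll) (simp add: field_simps)
  then show ?thesis using C by simp
qed

end
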